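(* Under the setting and recursive definitions of $\mu^*_l$ and $\sigma^{*2}_l$ below, for every $l=1,\dots,L$ and every $i=1,\dots,n_l$, $$\mu^*_l(\mathbf x^{[l]}_i)=y^{[l]}_i\quad\text{and}\quad\sigma^{*2}_l(\mathbf x^{[l]}_i)=0.$$
   Context: Fix $L\ge2$, $d\ge1$. For $l=1,\dots,L$ let $\mathcal X_l=\{\mathbf x^{[l]}_1,\dots,\mathbf x^{[l]}_{n_l}\}\subset\mathbb R^d$ be nested designs with distinct points, $\mathcal X_L\subseteq\cdots\subseteq\mathcal X_1$, with $\mathbf x^{[l]}_i=\mathbf x^{[l-1]}_i$ for $i\le n_l$, and let $\mathbf y_l=(y^{[l]}_1,\dots,y^{[l]}_{n_l})^T$ be observed outputs. Parameters: $\alpha_l\in\mathbb R$, $\tau_l^2>0$, $\theta_{lj}>0$, $\theta_{ly}>0$. Kernels: $K_1(\mathbf x,\mathbf x')=\prod_{j=1}^d\exp(-(x_j-x_j')^2/\theta_{1j})$; for $l\ge2$, $K_l((\mathbf x,y),(\mathbf x',y'))=\exp(-(y-y')^2/\theta_{ly})\prod_{j=1}^d\exp(-(x_j-x_j')^2/\theta_{lj})$. Matrices $\mathbf K_1=(K_1(\mathbf x^{[1]}_i,\mathbf x^{[1]}_k))$, $\mathbf K_l=(K_l((\mathbf x^{[l]}_i,y^{[l-1]}_i),(\mathbf x^{[l]}_k,y^{[l-1]}_k)))$ ($l\ge2$), assumed invertible; $r_i=(\mathbf K_l^{-1}(\mathbf y_l-\alpha_l\mathbf 1_{n_l}))_i$.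 Define $\mu_1^*(\mathbf x)=\alpha_1+\mathbf k_1(\mathbf x)^T\mathbf K_1^{-1}(\mathbf y_1-\alpha_1\mathbf 1_{n_1})$, $\sigma_1^{*2}(\mathbf x)=\tau_1^2(1-\mathbf k_1(\mathbf x)^T\mathbf K_1^{-1}\mathbf k_1(\mathbf x))$ with $(\mathbf k_1(\mathbf x))_i=K_1(\mathbf x,\mathbf x^{[1]}_i)$, and for $l\ge2$ recursively $\mu^*_l(\mathbf x)=\alpha_l+\sum_{i=1}^{n_l}r_i\prod_{j}\exp(-(x_j-x^{[l]}_{ij})^2/\theta_{lj})\,(1+2\sigma^{*2}_{l-1}(\mathbf x)/\theta_{ly})^{-1/2}\exp(-(y^{[l-1]}_i-\mu^*_{l-1}(\mathbf x))^2/(\theta_{ly}+2\sigma^{*2}_{l-1}(\mathbf x)))$, $\sigma^{*2}_l(\mathbf x)=\tau_l^2-(\mu^*_l(\mathbf x)-\alpha_l)^2+\sum_{i,k=1}^{n_l}\zeta_{ik}(r_ir_k-\tau_l^2(\mathbf K_l^{-1})_{ik})\prod_j\exp(-((x_j-x^{[l]}_{ij})^2+(x_j-x^{[l]}_{kj})^2)/\theta_{lj})$, with $\zeta_{ik}=(1+4\sigma^{*2}_{l-1}(\mathbf x)/\theta_{ly})^{-1/2}\exp\big(-(\tfrac{y^{[l-1]}_i+y^{[l-1]}_k}{2}-\mu^*_{l-1}(\mathbf x))^2/(\theta_{ly}/2+2\sigma^{*2}_{l-1}(\mathbf x))-(y^{[l-1]}_i-y^{[l-1]}_k)^2/(2\theta_{ly})\big)$.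 Here $x^{[l]}_{ij}$ is the $j$-th coordinate of $\mathbf x^{[l]}_i$. *)

theory Defs
  imports Complex_Main "Jordan_Normal_Form.Matrix"
begin

text \<open>Levels are numbered 1..L; design indices are 0-based: point i of level l is X l i, i < n l;
 output y_i^[l] is Y l i.  theta l j = theta_{lj}, thetay l = theta_{ly}.\<close>

definition gkern :: "('d::finite \<Rightarrow> real) \<Rightarrow> ('d \<Rightarrow> real) \<Rightarrow> ('d \<Rightarrow> real) \<Rightarrow> real" where
  "gkern th x x' = (\<Prod>j\<in>UNIV. exp (- ((x j - x' j)^2) / th j))"

definition Kmat :: "(nat \<Rightarrow> nat) \<Rightarrow> (nat \<Rightarrow> nat \<Rightarrow> ('d::finite \<Rightarrow> real)) \<Rightarrow> (nat \<Rightarrow> nat \<Rightarrow> real)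
    \<Rightarrow> (nat \<Rightarrow> 'd \<Rightarrow> real) \<Rightarrow> (nat \<Rightarrow> real) \<Rightarrow> nat \<Rightarrow> real mat" where
  "Kmat n X Y theta thetay l =
     (if l = 1 then mat (n 1) (n 1) (\<lambda>(i,k). gkern (theta 1) (X 1 i) (X 1 k))
      else mat (n l) (n l) (\<lambda>(i,k). exp (- ((Y (l-1) i - Y (l-1) k)^2) / thetay l)
                                     * gkern (theta l) (X l i) (X l k)))"

definition mat_inv :: "real mat \<Rightarrow> real mat" where
  "mat_inv A = (SOME B. inverts_mat A B \<and> inverts_mat B A)"

definition rvec :: "(nat \<Rightarrow> nat) \<Rightarrow> (nat \<Rightarrow> nat \<Rightarrow> ('d::finite \<Rightarrow> real)) \<Rightarrow> (nat \<Rightarrow> nat \<Rightarrow> real)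
    \<Rightarrow> (nat \<Rightarrow> real) \<Rightarrow> (nat \<Rightarrow> 'd \<Rightarrow> real) \<Rightarrow> (nat \<Rightarrow> real) \<Rightarrow> nat \<Rightarrow> real vec" where
  "rvec n X Y alpha theta thetay l =
     mat_inv (Kmat n X Y theta thetay l) *\<^sub>v vec (n l) (\<lambda>i. Y l i - alpha l)"

text \<open>musig ... l x = (mu*_l(x), sigma*^2_l(x)); level 0 is unused junk.\<close>
fun musig :: "(nat \<Rightarrow> nat) \<Rightarrow> (nat \<Rightarrow> nat \<Rightarrow> ('d::finite \<Rightarrow> real)) \<Rightarrow> (nat \<Rightarrow> nat \<Rightarrow> real)
    \<Rightarrow> (nat \<Rightarrow> real) \<Rightarrow> (nat \<Rightarrow> real) \<Rightarrow> (nat \<Rightarrow> 'd \<Rightarrow> real) \<Rightarrow> (nat \<Rightarrow> real)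
    \<Rightarrow> nat \<Rightarrow> ('d \<Rightarrow> real) \<Rightarrow> real \<times> real" where
  "musig n X Y alpha tau2 theta thetay 0 x = (0, 0)"
| "musig n X Y alpha tau2 theta thetay (Suc 0) x =
    (let Ki = mat_inv (Kmat n X Y theta thetay 1);
         r = rvec n X Y alpha theta thetay 1;
         kv = (\<lambda>i. gkern (theta 1) x (X 1 i))
     in (alpha 1 + (\<Sum>i<n 1. kv i * r $ i),
         tau2 1 * (1 - (\<Sum>i<n 1. \<Sum>k<n 1. kv i * Ki $$ (i,k) * kv k))))"
| "musig n X Y alpha tau2 theta thetay (Suc (Suc m)) x =
    (let l = Suc (Suc m);
         (mp, sp) = musig n X Y alpha tau2 theta thetay (Suc m) x;
         Ki = mat_inv (Kmat n X Y theta thetay l);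
         r = rvec n X Y alpha theta thetay l;
         mu = alpha l + (\<Sum>i<n l. r $ i * (\<Prod>j\<in>UNIV. exp (- ((x j - X l i j)^2) / theta l j))
                 * (1 / sqrt (1 + 2 * sp / thetay l))
                 * exp (- ((Y (l-1) i - mp)^2) / (thetay l + 2 * sp)));
         zeta = (\<lambda>i k. (1 / sqrt (1 + 4 * sp / thetay l))
                 * exp (- (((Y (l-1) i + Y (l-1) k) / 2 - mp)^2) / (thetay l / 2 + 2 * sp)
                        - (Y (l-1) i - Y (l-1) k)^2 / (2 * thetay l)))
     in (mu,
         tau2 l - (mu - alpha l)^2
          + (\<Sum>i<n l. \<Sum>k<n l. zeta i k * (r $ i * r $ k - tau2 l * Ki $$ (i,k))
               * (\<Prod>j\<in>UNIV. exp (- ((x j - X l i j)^2 + (x j - X l k j)^2) / theta l j)))))"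

end

theory Submission imports Defs begin

lemma mat_inv_props:
  assumes "invertible_mat (K::real mat)" "K \<in> carrier_mat N N"
  shows "mat_inv K \<in> carrier_mat N N" "K * mat_inv K = 1\<^sub>m N"
proof -
  from assms(1) obtain B where B: "inverts_mat K B \<and> inverts_mat B K"
    unfolding invertible_mat_def by blast
  hence S: "inverts_mat K (mat_inv K) \<and> inverts_mat (mat_inv K) K"
    unfolding mat_inv_def by (rule someI)
  then have e1: "K * mat_inv K = 1\<^sub>m N" "mat_inv K * K = 1\<^sub>m (dim_row (mat_inv K))"
    using assms(2) unfolding inverts_mat_def by auto
  have "dim_col (K * mat_inv K) = N" using e1 by simp
  hence c: "dim_col (mat_inv K) = N" by simp
  have "dim_col (mat_inv K * K) = dim_row (mat_inv K)" using e1 by simp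
  hence "dim_row (mat_inv K) = N" using assms(2) by simp
  with c show "mat_inv K \<in> carrier_mat N N" by auto
  show "K * mat_inv K = 1\<^sub>m N" by (fact e1(1))
qed

lemma key:
  fixes K Ki :: "real mat"
  assumes K: "K \<in> carrier_mat N N" and Ki: "Ki \<in> carrier_mat N N" and KK: "K * Ki = 1\<^sub>m N"
    and sym: "\<And>a b. a < N \<Longrightarrow> b < N \<Longrightarrow> K $$ (a,b) = K $$ (b,a)"
    and diag: "K $$ (i,i) = 1" and i: "i < N" and w: "dim_vec w = N"
  shows "(\<Sum>k<N. K$$(i,k) * (Ki *\<^sub>v w)$k) = w$i"
    and "(\<Sum>k<N. \<Sum>m<N. K$$(i,k)*K$$(i,m)*((Ki *\<^sub>v w)$k*(Ki *\<^sub>v w)$m - t*Ki$$(k,m))) = (w$i)^2 - t"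
    and "(\<Sum>k<N. \<Sum>m<N. K$$(i,k)*Ki$$(k,m)*K$$(i,m)) = 1"
proof -
  define r where "r = Ki *\<^sub>v w"
  have wc: "w \<in> carrier_vec N" using w by (rule carrier_vecI)
  have "K *\<^sub>v (Ki *\<^sub>v w) = (K * Ki) *\<^sub>v w"
    using K Ki wc by (simp add: assoc_mult_mat_vec)
  also have "\<dots> = w" using KK wc by simp
  finally have A: "K *\<^sub>v (Ki *\<^sub>v w) = w" .
  have rowexp: "(K *\<^sub>v v) $ i = (\<Sum>k<N. K$$(i,k) * v$k)" if "dim_vec v = N" for v
    using K i that by (auto simp: mult_mat_vec_def scalar_prod_def lessThan_atLeast0 intro!: sum.cong)
  show S1: "(\<Sum>k<N. K$$(i,k) * (Ki *\<^sub>v w)$k) = w$i"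
    using A rowexp[of "Ki *\<^sub>v w"] Ki by simp
  have KKK: "K * Ki * K = K" using KK K by simp
  have "(K * Ki * K) $$ (i,i) = (\<Sum>k\<in>{0..<N}. K$$(i,k) * (\<Sum>m\<in>{0..<N}. Ki$$(k,m) * K$$(m,i)))"
    using K Ki i by (simp add: scalar_prod_def lessThan_atLeast0)
  also have "\<dots> = (\<Sum>m\<in>{0..<N}. \<Sum>k\<in>{0..<N}. K$$(i,k) * Ki$$(k,m) * K$$(m,i))"
    by (simp add: sum_distrib_left mult.assoc) (rule sum.swap)
  also have "\<dots> = (\<Sum>m<N. (\<Sum>k<N. K$$(i,k) * Ki$$(k,m)) * K$$(m,i))"
    by (simp add: sum_distrib_right lessThan_atLeast0)
  finally have B: "(\<Sum>m<N. (\<Sum>k<N. K$$(i,k) * Ki$$(k,m)) * K$$(m,i)) = 1"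
    using KKK diag by simp
  show "(\<Sum>k<N. \<Sum>m<N. K$$(i,k)*Ki$$(k,m)*K$$(i,m)) = 1"
  proof -
    have "(\<Sum>k<N. \<Sum>m<N. K$$(i,k)*Ki$$(k,m)*K$$(i,m)) = (\<Sum>k<N. \<Sum>m<N. K$$(i,k)*Ki$$(k,m)*K$$(m,i))"
      by (intro sum.cong refl) (simp add: sym i)
    also have "\<dots> = (\<Sum>m<N. (\<Sum>k<N. K$$(i,k) * Ki$$(k,m)) * K$$(m,i))"
      by (subst sum.swap) (simp only: sum_distrib_right)
    finally show ?thesis using B by simp
  qed
  have "(\<Sum>k<N. \<Sum>m<N. K$$(i,k)*K$$(i,m)*(r$k*r$m - t*Ki$$(k,m)))
     = (\<Sum>k<N. \<Sum>m<N. (K$$(i,k)*r$k)*(K$$(i,m)*r$m) - t*(K$$(i,k)*Ki$$(k,m)*K$$(m,i)))"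
    by (intro sum.cong refl) (simp add: sym i algebra_simps)
  also have "\<dots> = (\<Sum>k<N. \<Sum>m<N. (K$$(i,k)*r$k)*(K$$(i,m)*r$m))
        - t*(\<Sum>k<N. \<Sum>m<N. K$$(i,k)*Ki$$(k,m)*K$$(m,i))"
    by (simp only: sum_subtractf sum_distrib_left)
  also have "(\<Sum>k<N. \<Sum>m<N. K$$(i,k)*Ki$$(k,m)*K$$(m,i))
           = (\<Sum>m<N. (\<Sum>k<N. K$$(i,k) * Ki$$(k,m)) * K$$(m,i))"
    by (subst sum.swap) (simp only: sum_distrib_right)
  also have "(\<Sum>k<N. \<Sum>m<N. (K$$(i,k)*r$k)*(K$$(i,m)*r$m)) = (\<Sum>k<N. K$$(i,k)*r$k) * (\<Sum>m<N. K$$(i,m)*r$m)"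
    by (simp only: sum_product)
  finally show "(\<Sum>k<N. \<Sum>m<N. K$$(i,k)*K$$(i,m)*((Ki *\<^sub>v w)$k*(Ki *\<^sub>v w)$m - t*Ki$$(k,m))) = (w$i)^2 - t"
    using S1 B unfolding r_def by (simp add: power2_eq_square)
qed

lemma gkern_sym: "gkern th x y = gkern th y x"
  unfolding gkern_def by (simp add: power2_commute)

lemma gkern_self: "gkern th x x = 1"
  unfolding gkern_def by simp

lemma Kmat_carrier: "Kmat n X Y theta thetay l \<in> carrier_mat (n l) (n l)"
  by (cases "l = 1") (auto simp: Kmat_def)

lemma Kmat_entry1: "i < n 1 \<Longrightarrow> k < n 1 \<Longrightarrow>
   Kmat n X Y theta thetay 1 $$ (i,k) = gkern (theta 1) (X 1 i) (X 1 k)"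
  by (simp add: Kmat_def)

lemma Kmat_entry2: "l \<noteq> 1 \<Longrightarrow> i < n l \<Longrightarrow> k < n l \<Longrightarrow>
   Kmat n X Y theta thetay l $$ (i,k) = exp (- ((Y (l-1) i - Y (l-1) k)^2) / thetay l)
                                     * gkern (theta l) (X l i) (X l k)"
  by (simp add: Kmat_def)

lemma Kmat_sym: "i < n l \<Longrightarrow> k < n l \<Longrightarrow>
   Kmat n X Y theta thetay l $$ (i,k) = Kmat n X Y theta thetay l $$ (k,i)"
  by (cases "l = 1") (auto simp: Kmat_def power2_commute gkern_sym[of _ "X _ i"])

lemma Kmat_diag: "i < n l \<Longrightarrow> Kmat n X Y theta thetay l $$ (i,i) = 1"
  by (cases "l = 1") (auto simp: Kmat_def gkern_self)


lemma level1:
  assumes inv: "invertible_mat (Kmat n X Y theta thetay 1)" and i: "i < n 1"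
  shows "musig n X Y alpha tau2 theta thetay 1 (X 1 i) = (Y 1 i, 0)"
proof -
  define K where "K = Kmat n X Y theta thetay 1"
  define w where "w = vec (n 1) (\<lambda>i. Y 1 i - alpha 1)"
  have Kc: "K \<in> carrier_mat (n 1) (n 1)" unfolding K_def by (rule Kmat_carrier)
  note P = mat_inv_props[OF inv[folded K_def] Kc]
  have r: "rvec n X Y alpha theta thetay 1 = mat_inv K *\<^sub>v w"
    by (simp add: rvec_def K_def w_def)
  have ent: "gkern (theta 1) (X 1 i) (X 1 k) = K $$ (i,k)" if "k < n 1" for k
    using Kmat_entry1[of i n k X Y theta thetay, OF i that] unfolding K_def by (rule sym)
  have sy: "\<And>a b. a < n 1 \<Longrightarrow> b < n 1 \<Longrightarrow> K $$ (a,b) = K $$ (b,a)"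
    unfolding K_def by (rule Kmat_sym)
  have dg: "K $$ (i,i) = 1" unfolding K_def using i by (rule Kmat_diag)
  have wd: "dim_vec w = n 1" by (simp add: w_def)
  note k = key[OF Kc P(1) P(2) sy dg i wd]
  have h1: "(\<Sum>k<n 1. gkern (theta 1) (X 1 i) (X 1 k) * rvec n X Y alpha theta thetay 1 $ k) = Y 1 i - alpha 1"
  proof -
    have "(\<Sum>k<n 1. gkern (theta 1) (X 1 i) (X 1 k) * rvec n X Y alpha theta thetay 1 $ k)
        = (\<Sum>k<n 1. K$$(i,k) * (mat_inv K *\<^sub>v w)$k)"
      by (rule sum.cong[OF refl]) (simp only: r ent lessThan_iff)
    also have "\<dots> = Y 1 i - alpha 1" using k(1) i by (simp add: w_def)
    finally show ?thesis .
  qed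
  have h2: "(\<Sum>k<n 1. \<Sum>m<n 1. gkern (theta 1) (X 1 i) (X 1 k) * mat_inv (Kmat n X Y theta thetay 1) $$ (k,m)
              * gkern (theta 1) (X 1 i) (X 1 m)) = 1"
    unfolding K_def[symmetric] using k(3)
    by (metis (no_types, lifting) ent lessThan_iff sum.cong)
  show ?thesis using h1 h2 by (simp add: Let_def)
qed



lemma zeta_id:
  fixes a b c t :: real assumes t: "t \<noteq> 0"
  shows "1 / sqrt (1 + 4 * 0 / t) * exp (- ((a + b) / 2 - c)\<^sup>2 / (t / 2 + 2 * 0) - (a - b)\<^sup>2 / (2 * t))
       = exp (- ((c - a)^2) / t) * exp (- ((c - b)^2) / t)"
proof -
  have "- ((a + b) / 2 - c)\<^sup>2 / (t / 2) - (a - b)\<^sup>2 / (2 * t) = - ((c - a)^2) / t + - ((c - b)^2) / t"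
    using t by (simp add: field_simps) (simp add: power2_eq_square algebra_simps)
  thus ?thesis by (simp add: exp_add[symmetric])
qed

lemma prod_exp_split:
  "(\<Prod>j\<in>UNIV. exp (- ((p j)\<^sup>2 + (q j)\<^sup>2) / (t j :: real)))
   = (\<Prod>j\<in>UNIV. exp (- ((p j)\<^sup>2) / t j)) * (\<Prod>j\<in>UNIV. exp (- ((q j)\<^sup>2) / t j))"
  unfolding prod.distrib[symmetric]
proof (rule prod.cong[OF refl])
  fix j
  show "exp (- ((p j)\<^sup>2 + (q j)\<^sup>2) / t j) = exp (- ((p j)\<^sup>2) / t j) * exp (- ((q j)\<^sup>2) / t j)"
    by (simp add: exp_add[symmetric] diff_divide_distrib)
qed

lemma step:
  assumes l: "l = Suc (Suc m)" and inv: "invertible_mat (Kmat n X Y theta thetay l)"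
    and i: "i < n l" and th: "thetay l > 0"
    and prev: "musig n X Y alpha tau2 theta thetay (Suc m) (X l i) = (Y (Suc m) i, 0)"
  shows "musig n X Y alpha tau2 theta thetay l (X l i) = (Y l i, 0)"
proof -
  have lm: "l - 1 = Suc m" using l by simp
  have l1: "l \<noteq> 1" using l by simp
  define K where "K = Kmat n X Y theta thetay l"
  define w where "w = vec (n l) (\<lambda>i. Y l i - alpha l)"
  define R where "R = rvec n X Y alpha theta thetay l"
  have Kc: "K \<in> carrier_mat (n l) (n l)" unfolding K_def by (rule Kmat_carrier)
  note P = mat_inv_props[OF inv[folded K_def] Kc]
  have r: "R = mat_inv K *\<^sub>v w"
    by (simp add: R_def rvec_def K_def w_def)
  have ent: "K $$ (i,k) = exp (- ((Y (Suc m) i - Y (Suc m) k)^2) / thetay l)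
      * (\<Prod>j\<in>UNIV. exp (- ((X l i j - X l k j)^2) / theta l j))" if "k < n l" for k
    using Kmat_entry2[where l=l and i=i and n=n and k=k and X=X and Y=Y and theta=theta and thetay=thetay, OF l1 i that] unfolding K_def lm gkern_def .
  have sy: "\<And>a b. a < n l \<Longrightarrow> b < n l \<Longrightarrow> K $$ (a,b) = K $$ (b,a)"
    unfolding K_def by (rule Kmat_sym)
  have dg: "K $$ (i,i) = 1" unfolding K_def using i by (rule Kmat_diag)
  have wd: "dim_vec w = n l" by (simp add: w_def)
  note k = key[OF Kc P(1) P(2) sy dg i wd]
  have wi: "w $ i = Y l i - alpha l" using i by (simp add: w_def)
  have S1: "(\<Sum>ia<n l. R $ ia * (\<Prod>j\<in>UNIV. exp (- (X l i j - X l ia j)\<^sup>2 / theta l j)) *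
          (1 / sqrt (1 + 2 * 0 / thetay l)) *
          exp (- (Y (Suc m) ia - Y (Suc m) i)\<^sup>2 / (thetay l + 2 * 0)))
      = Y l i - alpha l"
  proof -
    have "(\<Sum>ia<n l. R $ ia * (\<Prod>j\<in>UNIV. exp (- (X l i j - X l ia j)\<^sup>2 / theta l j)) *
          (1 / sqrt (1 + 2 * 0 / thetay l)) *
          exp (- (Y (Suc m) ia - Y (Suc m) i)\<^sup>2 / (thetay l + 2 * 0)))
       = (\<Sum>k<n l. K$$(i,k) * (mat_inv K *\<^sub>v w)$k)"
    proof (rule sum.cong[OF refl])
      fix k assume kk: "k \<in> {..<n l}"
      have pc: "(Y (Suc m) k - Y (Suc m) i)^2 = (Y (Suc m) i - Y (Suc m) k)^2" by (rule power2_commute)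
      show "R $ k * (\<Prod>j\<in>UNIV. exp (- (X l i j - X l k j)\<^sup>2 / theta l j)) *
          (1 / sqrt (1 + 2 * 0 / thetay l)) *
          exp (- (Y (Suc m) k - Y (Suc m) i)\<^sup>2 / (thetay l + 2 * 0)) = K$$(i,k) * (mat_inv K *\<^sub>v w)$k"
        unfolding pc ent[OF kk[simplified]] r by simp
    qed
    also have "\<dots> = Y l i - alpha l" using k(1) wi by simp
    finally show ?thesis .
  qed
  have S2: "(\<Sum>ia<n l. \<Sum>k<n l.
             1 / sqrt (1 + 4 * 0 / thetay l) *
             exp (- ((Y (Suc m) ia + Y (Suc m) k) / 2 - Y (Suc m) i)\<^sup>2 /
                  (thetay l / 2 + 2 * 0) -
                  (Y (Suc m) ia - Y (Suc m) k)\<^sup>2 / (2 * thetay l)) *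
             (R $ ia * R $ k - tau2 l * mat_inv (Kmat n X Y theta thetay l) $$ (ia, k)) *
             (\<Prod>j\<in>UNIV.
                exp (- ((X l i j - X l ia j)\<^sup>2 + (X l i j - X l k j)\<^sup>2) / theta l j)))
      = (Y l i - alpha l)^2 - tau2 l"
  proof -
    have "(\<Sum>ia<n l. \<Sum>k<n l.
             1 / sqrt (1 + 4 * 0 / thetay l) *
             exp (- ((Y (Suc m) ia + Y (Suc m) k) / 2 - Y (Suc m) i)\<^sup>2 /
                  (thetay l / 2 + 2 * 0) -
                  (Y (Suc m) ia - Y (Suc m) k)\<^sup>2 / (2 * thetay l)) *
             (R $ ia * R $ k - tau2 l * mat_inv (Kmat n X Y theta thetay l) $$ (ia, k)) *
             (\<Prod>j\<in>UNIV.
                exp (- ((X l i j - X l ia j)\<^sup>2 + (X l i j - X l k j)\<^sup>2) / theta l j)))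
       = (\<Sum>ia<n l. \<Sum>k<n l. K$$(i,ia)*K$$(i,k)*((mat_inv K *\<^sub>v w)$ia*(mat_inv K *\<^sub>v w)$k - tau2 l*mat_inv K$$(ia,k)))"
    proof (intro sum.cong refl)
      fix ia k assume ia: "ia \<in> {..<n l}" and kk: "k \<in> {..<n l}"
      have th0: "thetay l \<noteq> 0" using th by simp
      show "1 / sqrt (1 + 4 * 0 / thetay l) *
             exp (- ((Y (Suc m) ia + Y (Suc m) k) / 2 - Y (Suc m) i)\<^sup>2 /
                  (thetay l / 2 + 2 * 0) -
                  (Y (Suc m) ia - Y (Suc m) k)\<^sup>2 / (2 * thetay l)) *
             (R $ ia * R $ k - tau2 l * mat_inv (Kmat n X Y theta thetay l) $$ (ia, k)) *
             (\<Prod>j\<in>UNIV.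
                exp (- ((X l i j - X l ia j)\<^sup>2 + (X l i j - X l k j)\<^sup>2) / theta l j))
          = K$$(i,ia)*K$$(i,k)*((mat_inv K *\<^sub>v w)$ia*(mat_inv K *\<^sub>v w)$k - tau2 l*mat_inv K$$(ia,k))"
        unfolding zeta_id[OF th0] prod_exp_split ent[OF ia[simplified]] ent[OF kk[simplified]]
        by (simp add: r K_def)
    qed
    also have "\<dots> = (Y l i - alpha l)^2 - tau2 l" using k(2) wi by simp
    finally show ?thesis .
  qed
  have "musig n X Y alpha tau2 theta thetay l (X l i) = musig n X Y alpha tau2 theta thetay (Suc (Suc m)) (X l i)"
    using l by simp
  also have "\<dots> = (Y l i, 0)"
    apply (simp only: musig.simps(3) Let_def prod.case prev)
    apply (simp only: l[symmetric] lm R_def[symmetric] S1 S2)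
    by simp
  finally show ?thesis .
qed

theorem proposition3p2:
  fixes L :: nat and n :: "nat \<Rightarrow> nat"
    and X :: "nat \<Rightarrow> nat \<Rightarrow> ('d::finite \<Rightarrow> real)" and Y :: "nat \<Rightarrow> nat \<Rightarrow> real"
    and alpha tau2 thetay :: "nat \<Rightarrow> real" and theta :: "nat \<Rightarrow> 'd \<Rightarrow> real"
  assumes L2: "L \<ge> 2"
    and distinct: "\<And>l. 1 \<le> l \<Longrightarrow> l \<le> L \<Longrightarrow> inj_on (X l) {..<n l}"
    and nested_card: "\<And>l. 2 \<le> l \<Longrightarrow> l \<le> L \<Longrightarrow> n l \<le> n (l - 1)"
    and nested_pts: "\<And>l i. 2 \<le> l \<Longrightarrow> l \<le> L \<Longrightarrow> i < n l \<Longrightarrow> X l i = X (l - 1) i"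
    and tau_pos: "\<And>l. 1 \<le> l \<Longrightarrow> l \<le> L \<Longrightarrow> tau2 l > 0"
    and theta_pos: "\<And>l j. 1 \<le> l \<Longrightarrow> l \<le> L \<Longrightarrow> theta l j > 0"
    and thetay_pos: "\<And>l. 2 \<le> l \<Longrightarrow> l \<le> L \<Longrightarrow> thetay l > 0"
    and K_inv: "\<And>l. 1 \<le> l \<Longrightarrow> l \<le> L \<Longrightarrow> invertible_mat (Kmat n X Y theta thetay l)"
  shows "\<forall>l\<in>{1..L}. \<forall>i<n l.
           fst (musig n X Y alpha tau2 theta thetay l (X l i)) = Y l i \<and>
           snd (musig n X Y alpha tau2 theta thetay l (X l i)) = 0"
proof -
  have main: "1 \<le> l \<Longrightarrow> l \<le> L \<Longrightarrow> \<forall>i<n l. musig n X Y alpha tau2 theta thetay l (X l i) = (Y l i, 0)" for l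
  proof (induction l)
    case 0 thus ?case by simp
  next
    case (Suc l')
    show ?case
    proof (cases l')
      case 0
      have inv: "invertible_mat (Kmat n X Y theta thetay 1)" using K_inv[of 1] L2 by simp
      show ?thesis using level1[OF inv] 0 by simp
    next
      case (Suc m)
      have IH: "\<forall>i<n (Suc m). musig n X Y alpha tau2 theta thetay (Suc m) (X (Suc m) i) = (Y (Suc m) i, 0)"
        using Suc.IH Suc.prems \<open>l' = Suc m\<close> by simp
      show ?thesis
      proof (intro allI impI)
        fix i assume i: "i < n (Suc l')"
        have le: "Suc (Suc m) \<le> L" using Suc.prems \<open>l' = Suc m\<close> by simp
        have nc: "n (Suc (Suc m)) \<le> n (Suc m)" using nested_card[OF _ le] by simp
        have xp: "X (Suc (Suc m)) i = X (Suc m) i" using nested_pts[OF _ le] i \<open>l' = Suc m\<close> by simp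
        have prev: "musig n X Y alpha tau2 theta thetay (Suc m) (X (Suc (Suc m)) i) = (Y (Suc m) i, 0)"
          using IH i nc xp \<open>l' = Suc m\<close> by simp
        have "musig n X Y alpha tau2 theta thetay (Suc (Suc m)) (X (Suc (Suc m)) i) = (Y (Suc (Suc m)) i, 0)"
          by (rule step[OF refl K_inv[OF _ le] _ thetay_pos[OF _ le] prev])
             (use i \<open>l' = Suc m\<close> in auto)
        thus "musig n X Y alpha tau2 theta thetay (Suc l') (X (Suc l') i) = (Y (Suc l') i, 0)"
          using \<open>l' = Suc m\<close> by simp
      qed
    qed
  qed
  show ?thesis using main by simp
qed

end
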